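(* Let $p$ be a prime, let $D$ be a probability distribution on $\mathbb{F}_p$, let $f_0,f_1,\dots,f_k:\mathbb{F}_p^n\to\mathbb{F}_p$, let $F:\mathbb{F}_p^k\to\mathbb{F}_p$ and let $\epsilon>0$. If $|\mathrm{bias}_{t,D}(f_0+a_1f_1+\dots+a_kf_k)|\le p^{-k}\epsilon$ for each $t\in\mathbb{F}_p^*$ and all $(a_1,\dots,a_k)\in\mathbb{F}_p^k$, then $|\mathrm{bias}_{t,D}(f_0+F\circ(f_1,\dots,f_k))|\le\epsilon$ for each $t\in\mathbb{F}_p^*$.
   Context: $\omega_p=\exp(2\pi i/p)$. For $f:\mathbb{F}_p^n\to\mathbb{F}_p$, $\mathrm{bias}_{t,D}f=\mathbb{E}_{x\sim D^n}\omega_p^{tf(x)}$, where $D^n$ is the product distribution with independent coordinates distributed according to $D$. *)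

theory Defs
  imports "HOL-Library.FuncSet" "HOL-Computational_Algebra.Primes" Complex_Main
begin

text \<open>Elements of F_p are represented by the naturals 0..p-1; F_p^n by functions
  in PiE {..<n} (\<lambda>_. {..<p}).\<close>

definition omega :: "nat \<Rightarrow> complex" where
  "omega p = cis (2 * pi / real p)"

definition is_distr :: "nat \<Rightarrow> (nat \<Rightarrow> real) \<Rightarrow> bool" where
  "is_distr p D \<longleftrightarrow> (\<forall>a<p. 0 \<le> D a) \<and> (\<Sum>a<p. D a) = 1"

definition Fpn :: "nat \<Rightarrow> nat \<Rightarrow> (nat \<Rightarrow> nat) set" where
  "Fpn p n = PiE {..<n} (\<lambda>_. {..<p})"

definition bias :: "nat \<Rightarrow> nat \<Rightarrow> nat \<Rightarrow> (nat \<Rightarrow> real) \<Rightarrow> ((nat \<Rightarrow> nat) \<Rightarrow> nat) \<Rightarrow> complex" where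
  "bias p n t D f = (\<Sum>x\<in>Fpn p n. complex_of_real (\<Prod>i<n. D (x i)) * omega p ^ (t * f x))"

end

theory Submission
  imports Defs
begin
lemma W_pow_p: "p > 0 \<Longrightarrow> omega p ^ p = 1"
  by (simp add: omega_def DeMoivre)

lemma W_mod: "p > 0 \<Longrightarrow> omega p ^ (m mod p) = omega p ^ m"
proof -
  assume p: "p > 0"
  have "omega p ^ m = omega p ^ (p * (m div p) + m mod p)" by simp
  also have "\<dots> = (omega p ^ p) ^ (m div p) * omega p ^ (m mod p)"
    by (simp only: power_add power_mult)
  also have "\<dots> = omega p ^ (m mod p)" using W_pow_p[OF p] by simp
  finally show ?thesis by simp
qed

lemma W_norm: "norm (omega p) = 1"
  by (simp add: omega_def)

lemma W_ne1: assumes "0 < r" "r < p" shows "omega p ^ r \<noteq> 1"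
proof
  assume h: "omega p ^ r = 1"
  have "omega p ^ r = cis (real r * (2 * pi / real p))" by (simp add: omega_def DeMoivre)
  hence "cos (real r * (2 * pi / real p)) = 1" using h
    by (metis Re_complex_of_real cis.sel(1) of_real_1)
  then obtain j :: int where j: "real r * (2 * pi / real p) = real_of_int j * 2 * pi" using cos_one_2pi_int by blast
  have "real r = j * real p" using j assms by (simp add: field_simps)
  hence "int r = j * int p" by (metis of_int_eq_iff of_int_mult of_int_of_nat_eq)
  moreover have "0 < int r" "int r < int p" using assms by auto
  ultimately show False
  proof (cases "j \<le> 0")
    case True
    hence "j * int p \<le> 0" by (simp add: mult_nonpos_nonneg)
    thus False using \<open>int r = j * int p\<close> \<open>0 < int r\<close> by linarith
  next
    case False
    hence "j * int p \<ge> 1 * int p" by (intro mult_right_mono) auto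
    thus False using \<open>int r = j * int p\<close> \<open>int r < int p\<close> by linarith
  qed
qed

lemma W_inj: assumes p: "p > 0" and h: "omega p ^ a = omega p ^ b" shows "a mod p = b mod p"
proof -
  have w0: "omega p \<noteq> 0" using W_norm[of p] by auto
  have *: "omega p ^ (a mod p) = omega p ^ (b mod p)" using h W_mod[OF p] by simp
  { fix u v assume uv: "u < p" "v < p" "u \<le> v" "omega p ^ u = omega p ^ v"
    have "omega p ^ v = omega p ^ u * omega p ^ (v - u)" using uv(3) by (metis le_add_diff_inverse power_add)
    hence "omega p ^ (v - u) = 1" using uv w0 by simp
    hence "u = v" using W_ne1[of "v-u" p] uv by force }
  note ** = this
  show ?thesis using **[of "a mod p" "b mod p"] **[of "b mod p" "a mod p"] * p
    by (metis mod_less_divisor nle_le)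
qed
lemma cancel_mod:
  fixes p t a b :: nat
  assumes "prime p" "0 < t" "t < p" "a < p" "b < p" "(t * a) mod p = (t * b) mod p"
  shows "a = b"
proof (rule ccontr)
  assume ne: "a \<noteq> b"
  have "int (t * a) mod int p = int (t * b) mod int p" using assms(6)
    by (metis of_nat_mod)
  hence "int p dvd int (t * a) - int (t * b)" by (rule mod_eq_dvd_iff[THEN iffD1])
  hence "int p dvd int t * (int a - int b)" by (simp add: algebra_simps)
  moreover have "prime (int p)" using assms(1) by simp
  ultimately have "int p dvd int t \<or> int p dvd (int a - int b)" using prime_dvd_mult_iff by blast
  moreover have "\<not> int p dvd int t" using assms(2,3) by (simp add: nat_dvd_not_less)
  moreover have "\<not> int p dvd (int a - int b)"
  proof
    assume d: "int p dvd (int a - int b)"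
    have "int a - int b \<noteq> 0" using ne by simp
    hence "\<bar>int p\<bar> \<le> \<bar>int a - int b\<bar>" using dvd_imp_le_int d by blast
    thus False using assms(4,5) by linarith
  qed
  ultimately show False by blast
qed

lemma unit_cnj: "norm (v::complex) = 1 \<Longrightarrow> v * cnj v = 1"
  by (metis complex_norm_square of_real_1 power_one)

lemma orth:
  fixes p t :: nat and K :: "nat set" and y z :: "nat \<Rightarrow> nat"
  assumes p: "prime p" and t: "0 < t" "t < p" and K: "finite K"
    and y: "y \<in> PiE K (\<lambda>_. {..<p})" and z: "z \<in> PiE K (\<lambda>_. {..<p})"
  shows "(\<Sum>a\<in>PiE K (\<lambda>_. {..<p}). \<Prod>i\<in>K. (omega p ^ (t * y i) * cnj (omega p ^ (t * z i))) ^ (a i))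
         = (if y = z then of_nat p ^ card K else 0)"
proof -
  let ?w = "omega p"
  have p0: "p > 0" using p prime_gt_0_nat by blast
  have nw: "\<And>m. norm (?w ^ m) = 1" by (simp add: norm_power W_norm)
  have fac: "(\<Sum>j<p. (?w ^ (t * y i) * cnj (?w ^ (t * z i))) ^ j) = (if y i = z i then of_nat p else 0)"
    if i: "i \<in> K" for i
  proof (cases "y i = z i")
    case True
    then show ?thesis using unit_cnj[OF nw] by simp
  next
    case False
    let ?u = "?w ^ (t * y i) * cnj (?w ^ (t * z i))"
    have up: "?u ^ p = 1"
    proof -
      have "?u ^ p = (?w ^ p) ^ (t * y i) * cnj ((?w ^ p) ^ (t * z i))"
        by (simp add: power_mult_distrib flip: power_mult) (simp add: mult.commute)
      thus ?thesis using W_pow_p[OF p0] by simp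
    qed
    have u1: "?u \<noteq> 1"
    proof
      assume "?u = 1"
      hence "?w ^ (t * y i) * (cnj (?w ^ (t * z i)) * ?w ^ (t * z i)) = ?w ^ (t * z i)"
        by (metis mult.assoc mult_1)
      moreover have "cnj (?w ^ (t * z i)) * ?w ^ (t * z i) = 1"
        using unit_cnj[OF nw] by (metis mult.commute)
      ultimately have "?w ^ (t * y i) = ?w ^ (t * z i)" by (metis mult_1_right)
      hence "(t * y i) mod p = (t * z i) mod p" using W_inj[OF p0] by blast
      moreover have "y i < p" "z i < p" using y z i by auto
      ultimately have "y i = z i" using cancel_mod[OF p t] by blast
      thus False using False by simp
    qed
    show ?thesis using False up u1 by (simp add: sum_gp_strict)
  qed
  have "(\<Sum>a\<in>PiE K (\<lambda>_. {..<p}). \<Prod>i\<in>K. (?w ^ (t * y i) * cnj (?w ^ (t * z i))) ^ (a i))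
      = (\<Prod>i\<in>K. \<Sum>j<p. (?w ^ (t * y i) * cnj (?w ^ (t * z i))) ^ j)"
    using prod_sum_PiE[OF K, of "\<lambda>_. {..<p}" "\<lambda>i j. (?w ^ (t * y i) * cnj (?w ^ (t * z i))) ^ j"]
    by simp
  also have "\<dots> = (\<Prod>i\<in>K. (if y i = z i then of_nat p else 0))"
    using fac by (rule prod.cong[OF refl])
  also have "\<dots> = (if y = z then of_nat p ^ card K else 0)"
  proof (cases "y = z")
    case True thus ?thesis by simp
  next
    case False
    then obtain i where "i \<in> K" "y i \<noteq> z i" using y z by (metis PiE_ext)
    thus ?thesis using K False by (simp add: prod_zero_iff) blast
  qed
  finally show ?thesis .
qed

lemma expand:
  fixes p t :: nat and K :: "nat set" and y z a :: "nat \<Rightarrow> nat"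
  shows "(\<Prod>i\<in>K. (omega p ^ (t * y i) * cnj (omega p ^ (t * z i))) ^ (a i))
    = omega p ^ (t * (\<Sum>i\<in>K. a i * y i)) * cnj (omega p ^ (t * (\<Sum>i\<in>K. a i * z i)))"
proof -
  have e: "omega p ^ (t * (\<Sum>i\<in>K. a i * v i)) = (\<Prod>i\<in>K. (omega p ^ (t * v i)) ^ a i)" for v :: "nat \<Rightarrow> nat"
    by (simp add: sum_distrib_left power_sum flip: power_mult) (simp add: ac_simps)
  show ?thesis by (simp add: e power_mult_distrib prod.distrib)
qed
lemma Wm: "p > 0 \<Longrightarrow> omega p ^ (t * (m mod p)) = omega p ^ (t * m)"
  by (metis W_mod mod_mult_right_eq)

lemma swap3:
  fixes c :: "'a \<Rightarrow> 'b \<Rightarrow> complex" and X :: "'b \<Rightarrow> 'c \<Rightarrow> complex"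
  assumes "finite A" "finite B" "finite C"
  shows "(\<Sum>z\<in>A. \<Sum>a\<in>B. c z a * (\<Sum>x\<in>C. X a x)) = (\<Sum>x\<in>C. \<Sum>z\<in>A. \<Sum>a\<in>B. c z a * X a x)"
proof -
  have "(\<Sum>z\<in>A. \<Sum>a\<in>B. c z a * (\<Sum>x\<in>C. X a x)) = (\<Sum>z\<in>A. \<Sum>x\<in>C. \<Sum>a\<in>B. c z a * X a x)"
    by (simp add: sum_distrib_left sum.swap[of _ B C])
  also have "\<dots> = (\<Sum>x\<in>C. \<Sum>z\<in>A. \<Sum>a\<in>B. c z a * X a x)" by (rule sum.swap)
  finally show ?thesis .
qed

theorem lemma2p10:
  fixes p n k :: nat and D :: "nat \<Rightarrow> real"
    and fs :: "nat \<Rightarrow> (nat \<Rightarrow> nat) \<Rightarrow> nat"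
    and F :: "(nat \<Rightarrow> nat) \<Rightarrow> nat" and \<epsilon> :: real
  assumes "prime p"
    and "is_distr p D"
    and "\<And>i x. i \<le> k \<Longrightarrow> x \<in> Fpn p n \<Longrightarrow> fs i x < p"
    and "\<And>y. y \<in> PiE {1..k} (\<lambda>_. {..<p}) \<Longrightarrow> F y < p"
    and "\<epsilon> > 0"
    and "\<forall>t\<in>{1..<p}. \<forall>a\<in>PiE {1..k} (\<lambda>_. {..<p}).
           norm (bias p n t D (\<lambda>x. (fs 0 x + (\<Sum>i\<in>{1..k}. a i * fs i x)) mod p))
             \<le> real p powr (- real k) * \<epsilon>"
  shows "\<forall>t\<in>{1..<p}.
           norm (bias p n t D (\<lambda>x. (fs 0 x + F (restrict (\<lambda>i. fs i x) {1..k})) mod p)) \<le> \<epsilon>"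
proof
  fix t assume tI: "t \<in> {1..<p}"
  hence t: "0 < t" "t < p" by auto
  have p: "prime p" by fact
  have p0: "p > 0" using p prime_gt_0_nat by blast
  define K where "K = {1..k}"
  define A where "A = PiE K (\<lambda>_. {..<p})"
  define w where "w = omega p"
  define P where "P = (of_nat p ^ k :: complex)"
  define W where "W x = complex_of_real (\<Prod>i<n. D (x i))" for x :: "nat \<Rightarrow> nat"
  define Y where "Y x = restrict (\<lambda>i. fs i x) K" for x
  define c where "c z a = w ^ (t * F z) * cnj (w ^ (t * (\<Sum>i\<in>K. a i * z i))) / P"
    for z a :: "nat \<Rightarrow> nat"
  define h where "h a x = (fs 0 x + (\<Sum>i\<in>K. a i * fs i x)) mod p" for a x
  define B where "B a = bias p n t D (h a)" for a
  have finK: "finite K" and cardK: "card K = k" by (auto simp: K_def)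
  have finA: "finite A" by (simp add: A_def finK finite_PiE)
  have cardA: "card A = p ^ k" by (simp add: A_def card_PiE finK cardK)
  have finX: "finite (Fpn p n)" by (simp add: Fpn_def finite_PiE)
  have P0: "P \<noteq> 0" using p0 by (simp add: P_def)
  have YA: "Y x \<in> A" if "x \<in> Fpn p n" for x
    using assms(3) that by (auto simp: Y_def A_def K_def)
  have Bdef: "B a = (\<Sum>x\<in>Fpn p n. W x * w ^ (t * fs 0 x) * w ^ (t * (\<Sum>i\<in>K. a i * Y x i)))" for a
  proof -
    have "B a = (\<Sum>x\<in>Fpn p n. W x * w ^ (t * h a x))" by (simp add: B_def bias_def W_def w_def)
    also have "\<dots> = (\<Sum>x\<in>Fpn p n. W x * w ^ (t * fs 0 x) * w ^ (t * (\<Sum>i\<in>K. a i * Y x i)))"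
    proof (rule sum.cong[OF refl])
      fix x assume "x \<in> Fpn p n"
      have "(\<Sum>i\<in>K. a i * Y x i) = (\<Sum>i\<in>K. a i * fs i x)" by (simp add: Y_def)
      moreover have "w ^ (t * h a x) = w ^ (t * (fs 0 x + (\<Sum>i\<in>K. a i * fs i x)))"
        unfolding h_def w_def by (rule Wm[OF p0])
      ultimately show "W x * w ^ (t * h a x) = W x * w ^ (t * fs 0 x) * w ^ (t * (\<Sum>i\<in>K. a i * Y x i))"
        by (simp add: distrib_left power_add)
    qed
    finally show ?thesis .
  qed
  have inner: "(\<Sum>z\<in>A. \<Sum>a\<in>A. c z a * w ^ (t * (\<Sum>i\<in>K. a i * Y x i))) = w ^ (t * F (Y x))"
    if x: "x \<in> Fpn p n" for x
  proof -
    have "(\<Sum>z\<in>A. \<Sum>a\<in>A. c z a * w ^ (t * (\<Sum>i\<in>K. a i * Y x i)))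
        = (\<Sum>z\<in>A. w ^ (t * F z) / P * (\<Sum>a\<in>A. \<Prod>i\<in>K. (w ^ (t * Y x i) * cnj (w ^ (t * z i))) ^ (a i)))"
    proof -
      have e: "c z a * w ^ (t * (\<Sum>i\<in>K. a i * Y x i)) = w ^ (t * F z) / P *
          (\<Prod>i\<in>K. (w ^ (t * Y x i) * cnj (w ^ (t * z i))) ^ (a i))" for z a
      proof -
        have "c z a * w ^ (t * (\<Sum>i\<in>K. a i * Y x i)) = w ^ (t * F z) / P *
          (w ^ (t * (\<Sum>i\<in>K. a i * Y x i)) * cnj (w ^ (t * (\<Sum>i\<in>K. a i * z i))))"
          by (simp add: c_def)
        also have "\<dots> = w ^ (t * F z) / P *
          (\<Prod>i\<in>K. (w ^ (t * Y x i) * cnj (w ^ (t * z i))) ^ (a i))"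
          unfolding w_def by (subst expand) (rule refl)
        finally show ?thesis .
      qed
      show ?thesis unfolding e by (simp only: sum_distrib_left)
    qed
    also have "\<dots> = (\<Sum>z\<in>A. w ^ (t * F z) / P * (if Y x = z then P else 0))"
    proof (rule sum.cong[OF refl])
      fix z assume z: "z \<in> A"
      show "w ^ (t * F z) / P * (\<Sum>a\<in>A. \<Prod>i\<in>K. (w ^ (t * Y x i) * cnj (w ^ (t * z i))) ^ (a i))
          = w ^ (t * F z) / P * (if Y x = z then P else 0)"
        using orth[OF p t finK YA[OF x, unfolded A_def] z[unfolded A_def]]
        unfolding A_def w_def P_def cardK by simp
    qed
    also have "\<dots> = (\<Sum>z\<in>A. if Y x = z then w ^ (t * F z) else 0)"
      using P0 by (intro sum.cong) auto
    also have "\<dots> = w ^ (t * F (Y x))" using finA YA[OF x] by simp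
    finally show ?thesis .
  qed
  have G: "bias p n t D (\<lambda>x. (fs 0 x + F (restrict (\<lambda>i. fs i x) {1..k})) mod p)
      = (\<Sum>z\<in>A. \<Sum>a\<in>A. c z a * B a)"
  proof -
    have "(\<Sum>z\<in>A. \<Sum>a\<in>A. c z a * B a)
       = (\<Sum>x\<in>Fpn p n. \<Sum>z\<in>A. \<Sum>a\<in>A. c z a * (W x * w ^ (t * fs 0 x) * w ^ (t * (\<Sum>i\<in>K. a i * Y x i))))"
      unfolding Bdef by (rule swap3[OF finA finA finX])
    also have "\<dots> = (\<Sum>x\<in>Fpn p n. W x * w ^ (t * fs 0 x) *
        (\<Sum>z\<in>A. \<Sum>a\<in>A. c z a * w ^ (t * (\<Sum>i\<in>K. a i * Y x i))))"
      by (simp add: sum_distrib_left ac_simps)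
    also have "\<dots> = (\<Sum>x\<in>Fpn p n. W x * w ^ (t * fs 0 x) * w ^ (t * F (Y x)))"
      using inner by simp
    also have "\<dots> = bias p n t D (\<lambda>x. (fs 0 x + F (restrict (\<lambda>i. fs i x) {1..k})) mod p)"
      unfolding bias_def
    proof (rule sum.cong[OF refl])
      fix x assume "x \<in> Fpn p n"
      have "omega p ^ (t * ((fs 0 x + F (restrict (\<lambda>i. fs i x) {1..k})) mod p))
          = w ^ (t * fs 0 x) * w ^ (t * F (Y x))"
        unfolding Wm[OF p0] by (simp add: w_def Y_def K_def distrib_left power_add)
      thus "W x * w ^ (t * fs 0 x) * w ^ (t * F (Y x)) =
         complex_of_real (\<Prod>i<n. D (x i)) * omega p ^ (t * ((fs 0 x + F (restrict (\<lambda>i. fs i x) {1..k})) mod p))"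
        by (simp add: W_def)
    qed
    finally show ?thesis by simp
  qed
  have nc: "norm (c z a) = 1 / real p ^ k" for z a
    by (simp add: c_def w_def norm_divide norm_mult norm_power W_norm P_def)
  have nB: "norm (B a) \<le> real p powr (- real k) * \<epsilon>" if "a \<in> A" for a
    using assms(6) tI that unfolding B_def h_def[abs_def] A_def K_def by blast
  have "norm (\<Sum>z\<in>A. \<Sum>a\<in>A. c z a * B a) \<le> (\<Sum>z\<in>A. \<Sum>a\<in>A. norm (c z a * B a))"
    by (rule order_trans[OF norm_sum sum_mono[OF norm_sum]])
  also have "\<dots> \<le> (\<Sum>z\<in>A. \<Sum>a\<in>A. 1 / real p ^ k * (real p powr (- real k) * \<epsilon>))"
    by (intro sum_mono) (auto simp: norm_mult nc intro!: divide_right_mono nB)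
  also have "\<dots> = real p ^ k * real p ^ k * (1 / real p ^ k * (1 / real p ^ k * \<epsilon>))"
    using p0 by (simp add: cardA powr_minus powr_realpow divide_inverse)
  also have "\<dots> = \<epsilon>" using p0 by (simp add: field_simps)
  finally show "norm (bias p n t D (\<lambda>x. (fs 0 x + F (restrict (\<lambda>i. fs i x) {1..k})) mod p)) \<le> \<epsilon>"
    using G by simp
qed
end
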